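(* Assume $f$ satisfies $(f_1)$ (or $(f_1')$), $(f_2)$ and $(f_3)$. Let $(u_n)\subset X$ be such that there is $d>0$ with $I(u_n)<d$ for all $n$ and $\|I'(u_n)\|_{X'}(1+\|u_n\|_X)\to0$. Then $(u_n)$ is bounded in $H^{1/2}(\mathbb{R})$.
   Context: $\|u\|^2=\int\int\frac{|u(x)-u(y)|^2}{|x-y|^2}dxdy+\|u\|_2^2$; $\|u\|_*^2=\int\ln(1+|x|)u^2$; $X=\{u\in H^{1/2}(\mathbb{R}):\|u\|_*<\infty\}$, $\|u\|_X^2=\|u\|^2+\|u\|_*^2$, $X'$ its dual. $V_0(u)=\int\int\ln|x-y|u(x)^2u(y)^2dxdy$, $F(s)=\int_0^sf$, $I(u)=\frac12\|u\|^2+\frac14V_0(u)-\int F(u)$. $(f_1)$/$(f_1')$: $f$ continuous with critical (resp. subcritical, and $f$ odd) exponential growth, $f(0)=0$, $F\ge0$. $(f_2)$: $f(t)/t\to0$ as $t\to0$. $(f_3)$: there is $\theta>4$ with $f(t)t\ge\theta F(t)>0$ for $t\ne0$. *)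

theory Defs
  imports "HOL-Analysis.Analysis"
begin

text \<open>Gagliardo double integral and L2 part of the H^{1/2}(R) norm (as in the paper, no constant).\<close>
definition gagliardo :: "(real \<Rightarrow> real) \<Rightarrow> ennreal" where
  "gagliardo u = (\<integral>\<^sup>+ x. \<integral>\<^sup>+ y. ennreal ((u x - u y)^2 / (x - y)^2) \<partial>lborel \<partial>lborel)"

definition L2sq :: "(real \<Rightarrow> real) \<Rightarrow> ennreal" where
  "L2sq u = (\<integral>\<^sup>+ x. ennreal ((u x)^2) \<partial>lborel)"

definition H12 :: "(real \<Rightarrow> real) set" where
  "H12 = {u. u \<in> borel_measurable lborel \<and> gagliardo u < \<infinity> \<and> L2sq u < \<infinity>}"

definition hnorm :: "(real \<Rightarrow> real) \<Rightarrow> real" where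
  "hnorm u = sqrt (enn2real (gagliardo u) + enn2real (L2sq u))"

definition starsq :: "(real \<Rightarrow> real) \<Rightarrow> ennreal" where
  "starsq u = (\<integral>\<^sup>+ x. ennreal (ln (1 + \<bar>x\<bar>) * (u x)^2) \<partial>lborel)"

definition Xsp :: "(real \<Rightarrow> real) set" where
  "Xsp = {u \<in> H12. starsq u < \<infinity>}"

definition normX :: "(real \<Rightarrow> real) \<Rightarrow> real" where
  "normX u = sqrt ((hnorm u)^2 + enn2real (starsq u))"

definition V0 :: "(real \<Rightarrow> real) \<Rightarrow> real" where
  "V0 u = (\<integral> p. ln \<bar>fst p - snd p\<bar> * (u (fst p))^2 * (u (snd p))^2 \<partial>(lborel \<Otimes>\<^sub>M lborel))"

definition primF :: "(real \<Rightarrow> real) \<Rightarrow> real \<Rightarrow> real" where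
  "primF f s = (LBINT t=0..s. f t)"

definition Ifun :: "(real \<Rightarrow> real) \<Rightarrow> (real \<Rightarrow> real) \<Rightarrow> real" where
  "Ifun f u = (hnorm u)^2 / 2 + V0 u / 4 - (\<integral> x. primF f (u x) \<partial>lborel)"

text \<open>I'(u)v as the (Gateaux) directional derivative; I is C^1 on X in the paper.\<close>
definition dI :: "(real \<Rightarrow> real) \<Rightarrow> (real \<Rightarrow> real) \<Rightarrow> (real \<Rightarrow> real) \<Rightarrow> real" where
  "dI f u v = deriv (\<lambda>t. Ifun f (\<lambda>x. u x + t * v x)) 0"

text \<open>\<parallel>I'(u)\<parallel>_{X'} (as an extended real, so unbounded functionals give \<infinity>)\<close>
definition dualnorm_dI :: "(real \<Rightarrow> real) \<Rightarrow> (real \<Rightarrow> real) \<Rightarrow> ereal" where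
  "dualnorm_dI f u = (SUP v \<in> {v \<in> Xsp. normX v \<le> 1}. ereal \<bar>dI f u v\<bar>)"

definition critical_exp_growth :: "(real \<Rightarrow> real) \<Rightarrow> bool" where
  "critical_exp_growth f \<longleftrightarrow> (\<exists>\<alpha>0>0.
     (\<forall>\<alpha>>\<alpha>0. ((\<lambda>t. \<bar>f t\<bar> / exp (\<alpha> * t^2)) \<longlongrightarrow> 0) at_infinity) \<and>
     (\<forall>\<alpha>. 0 < \<alpha> \<and> \<alpha> < \<alpha>0 \<longrightarrow> filterlim (\<lambda>t. \<bar>f t\<bar> / exp (\<alpha> * t^2)) at_top at_infinity))"

definition subcritical_exp_growth :: "(real \<Rightarrow> real) \<Rightarrow> bool" where
  "subcritical_exp_growth f \<longleftrightarrow>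
     (\<forall>\<alpha>>0. ((\<lambda>t. \<bar>f t\<bar> / exp (\<alpha> * t^2)) \<longlongrightarrow> 0) at_infinity)"

definition f1 :: "(real \<Rightarrow> real) \<Rightarrow> bool" where
  "f1 f \<longleftrightarrow> continuous_on UNIV f \<and> critical_exp_growth f \<and> f 0 = 0 \<and> (\<forall>s. primF f s \<ge> 0)"

definition f1' :: "(real \<Rightarrow> real) \<Rightarrow> bool" where
  "f1' f \<longleftrightarrow> continuous_on UNIV f \<and> subcritical_exp_growth f \<and> (\<forall>t. f (-t) = - f t)
     \<and> f 0 = 0 \<and> (\<forall>s. primF f s \<ge> 0)"

definition f2 :: "(real \<Rightarrow> real) \<Rightarrow> bool" where
  "f2 f \<longleftrightarrow> ((\<lambda>t. f t / t) \<longlongrightarrow> 0) (at 0)"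

definition f3 :: "(real \<Rightarrow> real) \<Rightarrow> bool" where
  "f3 f \<longleftrightarrow> (\<exists>\<theta>>4. \<forall>t. t \<noteq> 0 \<longrightarrow> f t * t \<ge> \<theta> * primF f t \<and> \<theta> * primF f t > 0)"

end

theory Submission
  imports Defs
begin

definition hcut :: "real \<Rightarrow> real \<Rightarrow> real" where
  "hcut m s = max 0 (min s (2*m - s)) + min 0 (max s (-2*m - s))"

lemma hcut_abs_le: "0 \<le> m \<Longrightarrow> \<bar>hcut m s\<bar> \<le> \<bar>s\<bar>"
  unfolding hcut_def by (auto simp: max_def min_def abs_if split: if_splits)

lemma hcut_lip: "0 \<le> m \<Longrightarrow> \<bar>hcut m a - hcut m b\<bar> \<le> \<bar>a - b\<bar>"
  unfolding hcut_def by (auto simp: max_def min_def abs_if split: if_splits)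

lemma hcut_id: "\<bar>s\<bar> \<le> m \<Longrightarrow> hcut m s = s"
  unfolding hcut_def by (auto simp: max_def min_def abs_if split: if_splits)

lemma hcut_zero: "0 \<le> m \<Longrightarrow> 2*m \<le> \<bar>s\<bar> \<Longrightarrow> hcut m s = 0"
  unfolding hcut_def by (auto simp: max_def min_def abs_if split: if_splits)

lemma hcut_pos: "0 \<le> m \<Longrightarrow> 0 < s \<Longrightarrow> 0 \<le> hcut m s"
  unfolding hcut_def by (auto simp: max_def min_def abs_if split: if_splits)

lemma hcut_neg: "0 \<le> m \<Longrightarrow> s < 0 \<Longrightarrow> hcut m s \<le> 0"
  unfolding hcut_def by (auto simp: max_def min_def abs_if split: if_splits)

lemma hcut_0: "hcut m 0 = 0"
  unfolding hcut_def by (auto simp: max_def min_def abs_if split: if_splits)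

lemma hcut_cont: "continuous_on UNIV (hcut m)"
  unfolding hcut_def by (intro continuous_intros)

lemma hcut_meas[measurable]: "hcut m \<in> borel_measurable borel"
  by (rule borel_measurable_continuous_onI[OF hcut_cont])

lemma diff_integral:
  fixes \<phi> :: "real \<Rightarrow> 'a \<Rightarrow> real" and \<psi> g :: "'a \<Rightarrow> real"
  assumes meas: "\<And>t. \<phi> t \<in> borel_measurable M"
    and psimeas: "\<psi> \<in> borel_measurable M"
    and gint: "integrable M g"
    and C: "0 \<le> C" and dpos: "0 < \<delta>"
    and bnd: "\<And>t z. \<bar>t\<bar> < \<delta> \<Longrightarrow> z \<in> space M \<Longrightarrow> \<bar>\<phi> t z - \<phi> 0 z\<bar> \<le> \<bar>t\<bar> * (g z + C * \<bar>\<phi> 0 z\<bar>)"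
    and der: "\<And>z. z \<in> space M \<Longrightarrow> ((\<lambda>t. \<phi> t z) has_real_derivative \<psi> z) (at 0)"
  shows "((\<lambda>t. \<integral>z. \<phi> t z \<partial>M) has_real_derivative
           (if integrable M (\<phi> 0) then \<integral>z. \<psi> z \<partial>M else 0)) (at 0)"
proof (cases "integrable M (\<phi> 0)")
  case True
  define w where "w z = \<bar>g z\<bar> + C * \<bar>\<phi> 0 z\<bar>" for z
  have wint: "integrable M w" unfolding w_def using True gint by auto
  have qb: "\<bar>(\<phi> t z - \<phi> 0 z) / t\<bar> \<le> w z" if "\<bar>t\<bar> < \<delta>" "t \<noteq> 0" "z \<in> space M" for t z
  proof -
    have "\<bar>\<phi> t z - \<phi> 0 z\<bar> \<le> \<bar>t\<bar> * w z"
      using bnd[OF that(1,3)] unfolding w_def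
      by (smt (verit, best) abs_ge_self mult_left_mono abs_ge_zero)
    then show ?thesis using that(2) by (simp add: divide_le_eq abs_divide mult.commute)
  qed
  have intt: "integrable M (\<phi> t)" if "\<bar>t\<bar> < \<delta>" for t
  proof (rule Bochner_Integration.integrable_bound[where f="\<lambda>z. \<bar>\<phi> 0 z\<bar> + \<delta> * w z"])
    show "integrable M (\<lambda>z. \<bar>\<phi> 0 z\<bar> + \<delta> * w z)" using True wint by auto
    show "\<phi> t \<in> borel_measurable M" by (rule meas)
    show "AE z in M. norm (\<phi> t z) \<le> norm (\<bar>\<phi> 0 z\<bar> + \<delta> * w z)"
    proof (rule AE_I2)
      fix z assume z: "z \<in> space M"
      have w0: "0 \<le> w z" unfolding w_def using C by auto
      have "\<bar>\<phi> t z - \<phi> 0 z\<bar> \<le> \<bar>t\<bar> * w z"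
        using bnd[OF that z] unfolding w_def
        by (smt (verit, best) abs_ge_self mult_left_mono abs_ge_zero)
      also have "\<dots> \<le> \<delta> * w z" using that w0 by (intro mult_right_mono) auto
      finally show "norm (\<phi> t z) \<le> norm (\<bar>\<phi> 0 z\<bar> + \<delta> * w z)" using w0 dpos by auto
    qed
  qed
  have "((\<lambda>t. ((\<integral>z. \<phi> t z \<partial>M) - (\<integral>z. \<phi> 0 z \<partial>M)) / (t - 0)) \<longlongrightarrow> (\<integral>z. \<psi> z \<partial>M)) (at 0)"
    unfolding tendsto_at_iff_sequentially
  proof (intro allI impI)
    fix X :: "nat \<Rightarrow> real" assume X0: "\<forall>i. X i \<in> UNIV - {0}" and Xl: "X \<longlonglongrightarrow> 0"
    obtain N where N: "\<And>n. n \<ge> N \<Longrightarrow> \<bar>X n\<bar> < \<delta>"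
      using LIMSEQ_D[OF Xl dpos] by auto
    have lim: "(\<lambda>n. \<integral>z. (\<phi> (X (n+N)) z - \<phi> 0 z) / X (n+N) \<partial>M) \<longlonglongrightarrow> (\<integral>z. \<psi> z \<partial>M)"
    proof (rule integral_dominated_convergence[where w=w])
      show "(\<lambda>z. (\<phi> (X (n+N)) z - \<phi> 0 z) / X (n+N)) \<in> borel_measurable M" for n
        using meas by measurable
      show "\<psi> \<in> borel_measurable M" by fact
      show "integrable M w" by fact
      show "AE z in M. (\<lambda>n. (\<phi> (X (n+N)) z - \<phi> 0 z) / X (n+N)) \<longlonglongrightarrow> \<psi> z"
      proof (rule AE_I2)
        fix z assume z: "z \<in> space M"
        have "((\<lambda>t. (\<phi> t z - \<phi> 0 z) / (t - 0)) \<longlongrightarrow> \<psi> z) (at 0)"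
          using der[OF z] unfolding has_field_derivative_iff .
        then have "((\<lambda>t. (\<phi> t z - \<phi> 0 z) / (t - 0)) \<circ> (\<lambda>n. X (n+N))) \<longlonglongrightarrow> \<psi> z"
          unfolding tendsto_at_iff_sequentially using X0 LIMSEQ_ignore_initial_segment[OF Xl, of N]
          by auto
        then show "(\<lambda>n. (\<phi> (X (n+N)) z - \<phi> 0 z) / X (n+N)) \<longlonglongrightarrow> \<psi> z" by (simp add: o_def)
      qed
      show "AE z in M. norm ((\<phi> (X (n+N)) z - \<phi> 0 z) / X (n+N)) \<le> w z" for n
      proof (rule AE_I2)
        fix z assume z: "z \<in> space M"
        have "X (n+N) \<noteq> 0" using X0 by blast
        moreover have "\<bar>X (n+N)\<bar> < \<delta>" using N[of "n+N"] by simp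
        ultimately show "norm ((\<phi> (X (n+N)) z - \<phi> 0 z) / X (n+N)) \<le> w z"
          using qb[of "X (n+N)" z] z by simp
      qed
    qed
    have eq: "(\<integral>z. (\<phi> (X (n+N)) z - \<phi> 0 z) / X (n+N) \<partial>M) =
        ((\<integral>z. \<phi> (X (n+N)) z \<partial>M) - (\<integral>z. \<phi> 0 z \<partial>M)) / (X (n+N) - 0)" for n
    proof -
      have "integrable M (\<phi> (X (n+N)))" using intt[of "X (n+N)"] N[of "n+N"] by simp
      then show ?thesis using True by (simp add: integral_diff)
    qed
    show "((\<lambda>t. ((\<integral>z. \<phi> t z \<partial>M) - (\<integral>z. \<phi> 0 z \<partial>M)) / (t - 0)) \<circ> X) \<longlonglongrightarrow> (\<integral>z. \<psi> z \<partial>M)"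
    proof (rule LIMSEQ_offset[where k=N])
      have "(\<lambda>n. ((\<integral>z. \<phi> (X (n+N)) z \<partial>M) - (\<integral>z. \<phi> 0 z \<partial>M)) / (X (n+N) - 0)) \<longlonglongrightarrow> (\<integral>z. \<psi> z \<partial>M)"
        using lim unfolding eq .
      then show "(\<lambda>n. ((\<lambda>t. ((\<integral>z. \<phi> t z \<partial>M) - (\<integral>z. \<phi> 0 z \<partial>M)) / (t - 0)) \<circ> X) (n + N)) \<longlonglongrightarrow> (\<integral>z. \<psi> z \<partial>M)"
        by (simp only: o_def)
    qed
  qed
  then show ?thesis using True unfolding has_field_derivative_iff by simp
next
  case False
  define r where "r = min \<delta> (min 1 (1 / (2 * C + 1)))"
  have rpos: "0 < r" unfolding r_def using dpos C by auto
  have zero: "(\<integral>z. \<phi> t z \<partial>M) = 0" if t: "t \<in> ball 0 r" for t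
  proof (rule not_integrable_integral_eq, rule notI)
    assume it: "integrable M (\<phi> t)"
    have tr: "\<bar>t\<bar> < \<delta>" "\<bar>t\<bar> \<le> 1" "\<bar>t\<bar> * C \<le> 1/2"
    proof -
      have "\<bar>t\<bar> < r" using t by (simp add: dist_norm)
      then show "\<bar>t\<bar> < \<delta>" "\<bar>t\<bar> \<le> 1" unfolding r_def by auto
      have "\<bar>t\<bar> < 1 / (2 * C + 1)" using \<open>\<bar>t\<bar> < r\<close> unfolding r_def by auto
      then have "\<bar>t\<bar> * (2 * C + 1) < 1" using C by (simp add: less_divide_eq)
      then show "\<bar>t\<bar> * C \<le> 1/2" using C by (simp add: algebra_simps)
    qed
    have "integrable M (\<phi> 0)"
    proof (rule Bochner_Integration.integrable_bound[where f="\<lambda>z. 2 * \<bar>\<phi> t z\<bar> + 2 * \<bar>g z\<bar>"])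
      show "integrable M (\<lambda>z. 2 * \<bar>\<phi> t z\<bar> + 2 * \<bar>g z\<bar>)" using it gint by auto
      show "\<phi> 0 \<in> borel_measurable M" by (rule meas)
      show "AE z in M. norm (\<phi> 0 z) \<le> norm (2 * \<bar>\<phi> t z\<bar> + 2 * \<bar>g z\<bar>)"
      proof (rule AE_I2)
        fix z assume z: "z \<in> space M"
        have b: "\<bar>\<phi> t z - \<phi> 0 z\<bar> \<le> \<bar>t\<bar> * g z + (\<bar>t\<bar> * C) * \<bar>\<phi> 0 z\<bar>"
          using bnd[OF tr(1) z] by (simp add: algebra_simps)
        have "\<bar>t\<bar> * g z \<le> \<bar>t\<bar> * \<bar>g z\<bar>" by (intro mult_left_mono) auto
        also have "\<dots> \<le> \<bar>g z\<bar>" using tr(2) by (intro mult_left_le_one_le) auto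
        finally have "\<bar>t\<bar> * g z \<le> \<bar>g z\<bar>" .
        moreover have "(\<bar>t\<bar> * C) * \<bar>\<phi> 0 z\<bar> \<le> 1/2 * \<bar>\<phi> 0 z\<bar>"
          using tr(3) by (intro mult_right_mono) auto
        moreover have "\<bar>\<phi> 0 z\<bar> \<le> \<bar>\<phi> t z\<bar> + \<bar>\<phi> t z - \<phi> 0 z\<bar>" by linarith
        ultimately show "norm (\<phi> 0 z) \<le> norm (2 * \<bar>\<phi> t z\<bar> + 2 * \<bar>g z\<bar>)" using b by simp
      qed
    qed
    then show False using False by simp
  qed
  have "((\<lambda>t. 0::real) has_real_derivative 0) (at 0)" by simp
  then have "((\<lambda>t. \<integral>z. \<phi> t z \<partial>M) has_real_derivative 0) (at 0)"
  proof (rule has_field_derivative_transform_within_open[where S="ball 0 r"])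
    show "open (ball (0::real) r)" by simp
    show "(0::real) \<in> ball 0 r" using rpos by simp
    show "0 = (\<integral>z. \<phi> x z \<partial>M)" if "x \<in> ball 0 r" for x using zero[OF that] by simp
  qed
  then show ?thesis using False by simp
qed

lemma primF_alt: "primF f = (\<lambda>s. LBINT t=ereal 0..ereal s. f t)"
  by (simp add: primF_def zero_ereal_def fun_eq_iff)

lemma primF_deriv:
  assumes cf: "continuous_on UNIV f"
  shows "(primF f has_real_derivative f s) (at s)"
proof -
  define d where "d = min 0 s - 1"
  define e where "e = max 0 s + 1"
  have "((\<lambda>u. LBINT y=ereal 0..ereal u. f y) has_vector_derivative f s) (at s within {d..e})"
    by (rule interval_integral_FTC2) (use cf in \<open>auto simp: d_def e_def intro: continuous_on_subset\<close>)
  then have "((\<lambda>u. LBINT y=ereal 0..ereal u. f y) has_vector_derivative f s) (at s within {d<..<e})"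
    by (rule has_vector_derivative_within_subset) auto
  then have "((\<lambda>u. LBINT y=ereal 0..ereal u. f y) has_vector_derivative f s) (at s)"
    by (subst (asm) has_vector_derivative_within_open) (auto simp: d_def e_def)
  then show ?thesis
    unfolding primF_alt by (simp add: has_real_derivative_iff_has_vector_derivative)
qed

lemma primF_0: "primF f 0 = 0"
  unfolding primF_alt by (simp add: interval_integral_endpoints_same)

lemma lin_bound:
  assumes cf: "continuous_on UNIV f" and f2: "f2 f" and f0: "f 0 = 0"
  shows "\<exists>L\<ge>0. \<forall>s. \<bar>s\<bar> \<le> R \<longrightarrow> \<bar>f s\<bar> \<le> L * \<bar>s\<bar>"
proof -
  have "((\<lambda>t. f t / t) \<longlongrightarrow> 0) (at 0)" using f2 unfolding f2_def .
  then obtain \<delta> where dpos: "\<delta> > 0" and dl: "\<And>t. t \<noteq> 0 \<Longrightarrow> \<bar>t\<bar> < \<delta> \<Longrightarrow> \<bar>f t / t\<bar> < 1"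
    unfolding LIM_eq by (metis zero_less_one diff_zero real_norm_def)
  have "compact {-\<bar>R\<bar>..\<bar>R\<bar>}" by simp
  then obtain B where B: "\<And>t. t \<in> {-\<bar>R\<bar>..\<bar>R\<bar>} \<Longrightarrow> norm (f t) \<le> B"
    using compact_imp_bounded[OF compact_continuous_image[OF continuous_on_subset[OF cf]]]
    unfolding bounded_iff by (metis image_eqI subset_UNIV)
  define L where "L = max 1 (\<bar>B\<bar> / \<delta>)"
  have "\<bar>f s\<bar> \<le> L * \<bar>s\<bar>" if s: "\<bar>s\<bar> \<le> R" for s
  proof (cases "s = 0")
    case True then show ?thesis using f0 by simp
  next
    case False
    show ?thesis
    proof (cases "\<bar>s\<bar> < \<delta>")
      case True
      have "\<bar>f s\<bar> / \<bar>s\<bar> < 1" using dl[OF False True] by (simp add: abs_divide)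
      then have "\<bar>f s\<bar> \<le> 1 * \<bar>s\<bar>" using False by (simp add: divide_less_eq)
      also have "\<dots> \<le> L * \<bar>s\<bar>" unfolding L_def by (intro mult_right_mono) auto
      finally show ?thesis .
    next
      case False
      have "\<bar>f s\<bar> \<le> B" using B[of s] s by (auto simp: abs_le_iff)
      then have "\<bar>f s\<bar> \<le> \<bar>B\<bar>" by linarith
      also have "\<dots> = (\<bar>B\<bar> / \<delta>) * \<delta>" using dpos by simp
      also have "\<dots> \<le> L * \<bar>s\<bar>" unfolding L_def using False dpos
        by (intro mult_mono) auto
      finally show ?thesis .
    qed
  qed
  moreover have "L \<ge> 0" unfolding L_def by simp
  ultimately show ?thesis by blast
qed

lemma F_diff_bound:
  assumes cf: "continuous_on UNIV f" and L: "\<And>s. \<bar>s\<bar> \<le> R \<Longrightarrow> \<bar>f s\<bar> \<le> L * \<bar>s\<bar>" and "0 \<le> L"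
    and a: "\<bar>a\<bar> \<le> K" and b: "\<bar>b\<bar> \<le> K" and KR: "K \<le> R"
  shows "\<bar>primF f b - primF f a\<bar> \<le> L * K * \<bar>b - a\<bar>"
proof (cases "a = b")
  case True then show ?thesis by simp
next
  case False
  have D: "\<And>x. (primF f has_real_derivative f x) (at x)" by (rule primF_deriv[OF cf])
  have "\<exists>z. min a b < z \<and> z < max a b \<and> primF f (max a b) - primF f (min a b) = (max a b - min a b) * f z"
    using False by (intro MVT2) (auto intro: D)
  then obtain z where z: "min a b < z" "z < max a b"
      "primF f (max a b) - primF f (min a b) = (max a b - min a b) * f z" by blast
  have zK: "\<bar>z\<bar> \<le> K" using z(1,2) a b by auto
  have "\<bar>primF f b - primF f a\<bar> = \<bar>b - a\<bar> * \<bar>f z\<bar>"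
    using z(3) by (cases "a \<le> b") (auto simp: abs_mult min_def max_def abs_minus_commute)
  also have "\<dots> \<le> \<bar>b - a\<bar> * (L * K)"
  proof (intro mult_left_mono)
    have "\<bar>f z\<bar> \<le> L * \<bar>z\<bar>" using L zK KR by auto
    also have "\<dots> \<le> L * K" using zK \<open>0 \<le> L\<close> by (intro mult_left_mono) auto
    finally show "\<bar>f z\<bar> \<le> L * K" .
  qed auto
  finally show ?thesis by (simp add: algebra_simps)
qed

abbreviation "PP \<equiv> (lborel \<Otimes>\<^sub>M lborel :: (real \<times> real) measure)"

definition dq :: "(real \<Rightarrow> real) \<Rightarrow> real \<times> real \<Rightarrow> real" where
  "dq w z = (w (fst z) - w (snd z)) / (fst z - snd z)"

lemma dq_meas[measurable]:
  assumes [measurable]: "w \<in> borel_measurable lborel"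
  shows "dq w \<in> borel_measurable PP"
  unfolding dq_def by measurable

lemma gag_eq:
  assumes [measurable]: "w \<in> borel_measurable lborel"
  shows "gagliardo w = (\<integral>\<^sup>+z. ennreal ((dq w z)^2) \<partial>PP)"
proof -
  have "gagliardo w = (\<integral>\<^sup>+x. \<integral>\<^sup>+y. (\<lambda>z. ennreal ((dq w z)^2)) (x, y) \<partial>lborel \<partial>lborel)"
    unfolding gagliardo_def dq_def by (simp add: power_divide)
  also have "\<dots> = (\<integral>\<^sup>+z. ennreal ((dq w z)^2) \<partial>PP)"
    by (rule lborel.nn_integral_fst) measurable
  finally show ?thesis .
qed

lemma gag_real:
  assumes [measurable]: "w \<in> borel_measurable lborel"
  shows "enn2real (gagliardo w) = (\<integral>z. (dq w z)^2 \<partial>PP)"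
  unfolding gag_eq[OF assms] by (rule integral_eq_nn_integral[symmetric]) auto

lemma gag_int:
  assumes [measurable]: "w \<in> borel_measurable lborel" and "gagliardo w < \<infinity>"
  shows "integrable PP (\<lambda>z. (dq w z)^2)"
  by (rule integrableI_bounded) (use assms in \<open>auto simp: gag_eq\<close>)

lemma L2_real:
  assumes [measurable]: "w \<in> borel_measurable lborel"
  shows "enn2real (L2sq w) = (\<integral>x. (w x)^2 \<partial>lborel)"
  unfolding L2sq_def by (rule integral_eq_nn_integral[symmetric]) auto

lemma L2_int:
  assumes [measurable]: "w \<in> borel_measurable lborel" and "L2sq w < \<infinity>"
  shows "integrable lborel (\<lambda>x. (w x)^2)"
  by (rule integrableI_bounded) (use assms in \<open>auto simp: L2sq_def\<close>)

lemma hnorm_sq: "(hnorm w)^2 = enn2real (gagliardo w) + enn2real (L2sq w)"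
  unfolding hnorm_def by (simp add: enn2real_nonneg add_nonneg_nonneg)

lemma normX_sq: "(normX w)^2 = enn2real (gagliardo w) + enn2real (L2sq w) + enn2real (starsq w)"
  unfolding normX_def hnorm_sq by (simp add: enn2real_nonneg add_nonneg_nonneg)

lemma normX_nonneg: "0 \<le> normX w"
  unfolding normX_def by (simp add: enn2real_nonneg)

lemma hnorm_nonneg: "0 \<le> hnorm w"
  unfolding hnorm_def by (simp add: enn2real_nonneg)

lemma Xsp_dom:
  assumes u: "u \<in> Xsp" and vm: "v \<in> borel_measurable lborel" and c: "0 \<le> c"
    and b1: "\<And>x. \<bar>v x\<bar> \<le> c * \<bar>u x\<bar>" and b2: "\<And>x y. \<bar>v x - v y\<bar> \<le> c * \<bar>u x - u y\<bar>"
  shows "v \<in> Xsp" "normX v \<le> c * normX u"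
proof -
  have um: "u \<in> borel_measurable lborel" and ug: "gagliardo u < \<infinity>" and ul: "L2sq u < \<infinity>"
    and us: "starsq u < \<infinity>" using u by (auto simp: Xsp_def H12_def)
  note [measurable] = um
  have sq1: "(v x)^2 \<le> c^2 * (u x)^2" for x
  proof -
    have "\<bar>v x\<bar>^2 \<le> (c * \<bar>u x\<bar>)^2" using b1[of x] by (intro power_mono) auto
    then show ?thesis by (simp add: power_mult_distrib)
  qed
  have sq2: "(v x - v y)^2 / (x - y)^2 \<le> c^2 * ((u x - u y)^2 / (x - y)^2)" for x y
  proof -
    have "\<bar>v x - v y\<bar>^2 \<le> (c * \<bar>u x - u y\<bar>)^2" using b2[of x y] by (intro power_mono) auto
    then have "(v x - v y)^2 \<le> c^2 * (u x - u y)^2" by (simp add: power_mult_distrib)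
    then show ?thesis by (simp add: divide_right_mono)
  qed
  have g: "gagliardo v \<le> ennreal (c^2) * gagliardo u"
  proof -
    have "gagliardo v \<le> (\<integral>\<^sup>+ x. \<integral>\<^sup>+ y. ennreal (c^2) * ennreal ((u x - u y)^2 / (x - y)^2) \<partial>lborel \<partial>lborel)"
      unfolding gagliardo_def
    proof (intro nn_integral_mono)
      fix x y
      show "ennreal ((v x - v y)^2 / (x - y)^2) \<le> ennreal (c^2) * ennreal ((u x - u y)^2 / (x - y)^2)"
        using sq2[of x y] by (simp only: ennreal_mult'[symmetric] ennreal_leI zero_le_power2)
    qed
    also have "\<dots> = (\<integral>\<^sup>+ x. ennreal (c^2) * \<integral>\<^sup>+ y. ennreal ((u x - u y)^2 / (x - y)^2) \<partial>lborel \<partial>lborel)"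
      by (intro nn_integral_cong nn_integral_cmult) measurable
    also have "\<dots> = ennreal (c^2) * gagliardo u"
      unfolding gagliardo_def by (intro nn_integral_cmult) measurable
    finally show ?thesis .
  qed
  have l: "L2sq v \<le> ennreal (c^2) * L2sq u"
  proof -
    have "L2sq v \<le> (\<integral>\<^sup>+ x. ennreal (c^2) * ennreal ((u x)^2) \<partial>lborel)"
      unfolding L2sq_def
    proof (intro nn_integral_mono)
      fix x
      show "ennreal ((v x)^2) \<le> ennreal (c^2) * ennreal ((u x)^2)"
        using sq1[of x] by (simp only: ennreal_mult'[symmetric] ennreal_leI zero_le_power2)
    qed
    also have "\<dots> = ennreal (c^2) * L2sq u"
      unfolding L2sq_def by (intro nn_integral_cmult) measurable
    finally show ?thesis .
  qed
  have s: "starsq v \<le> ennreal (c^2) * starsq u"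
  proof -
    have "starsq v \<le> (\<integral>\<^sup>+ x. ennreal (c^2) * ennreal (ln (1 + \<bar>x\<bar>) * (u x)^2) \<partial>lborel)"
      unfolding starsq_def
    proof (intro nn_integral_mono)
      fix x
      have "ln (1 + \<bar>x\<bar>) * (v x)^2 \<le> ln (1 + \<bar>x\<bar>) * (c^2 * (u x)^2)"
        by (intro mult_left_mono sq1) auto
      then show "ennreal (ln (1 + \<bar>x\<bar>) * (v x)^2) \<le> ennreal (c^2) * ennreal (ln (1 + \<bar>x\<bar>) * (u x)^2)"
        by (simp add: ennreal_mult'[symmetric] ennreal_leI mult.left_commute)
    qed
    also have "\<dots> = ennreal (c^2) * starsq u"
      unfolding starsq_def by (intro nn_integral_cmult) measurable
    finally show ?thesis .
  qed
  have gf: "gagliardo v < \<infinity>" using g ug by (simp add: ennreal_mult_less_top le_less_trans)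
  have lf: "L2sq v < \<infinity>" using l ul by (simp add: ennreal_mult_less_top le_less_trans)
  have sf: "starsq v < \<infinity>" using s us by (simp add: ennreal_mult_less_top le_less_trans)
  show "v \<in> Xsp" using vm gf lf sf by (simp add: Xsp_def H12_def)
  have er: "enn2real a \<le> c^2 * enn2real b" if "a \<le> ennreal (c^2) * b" "b < \<infinity>" for a b
  proof -
    have "enn2real a \<le> enn2real (ennreal (c^2) * b)"
      using that by (intro enn2real_mono) (auto simp: ennreal_mult_less_top)
    then show ?thesis by (simp add: enn2real_mult)
  qed
  have "(normX v)^2 \<le> c^2 * (normX u)^2"
    unfolding normX_sq using er[OF g ug] er[OF l ul] er[OF s us] by (simp add: algebra_simps)
  also have "\<dots> = (c * normX u)^2" by (simp add: power_mult_distrib)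
  finally have "(normX v)^2 \<le> (c * normX u)^2" .
  moreover have "0 \<le> c * normX u" using c normX_nonneg by simp
  ultimately show "normX v \<le> c * normX u" by (rule power2_le_imp_le)
qed

lemma sqdiff_bound:
  fixes a b t :: real assumes "\<bar>t\<bar> < 1"
  shows "\<bar>(a + t*b)^2 - a^2\<bar> \<le> \<bar>t\<bar> * (a^2 + 2 * b^2 + 0 * \<bar>a^2\<bar>)"
proof -
  have e: "(a + t*b)^2 - a^2 = t * (2*a*b + t*b^2)" by (simp add: power2_eq_square algebra_simps)
  have "\<bar>2*a*b\<bar> \<le> a^2 + b^2"
    using sum_squares_bound[of a b] abs_le_iff[of "2*a*b"]
    by (smt (verit) power2_diff power2_sum zero_le_power2)
  moreover have "\<bar>t*b^2\<bar> \<le> b^2" using assms by (simp add: abs_mult mult_left_le_one_le)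
  ultimately have "\<bar>2*a*b + t*b^2\<bar> \<le> a^2 + 2*b^2" by linarith
  then show ?thesis unfolding e abs_mult by (simp add: mult_left_mono)
qed

lemma dq_lin: "dq (\<lambda>x. u x + t * v x) z = dq u z + t * dq v z"
  unfolding dq_def by (simp add: field_simps diff_divide_distrib add_divide_distrib)

lemma gag_deriv:
  assumes u: "u \<in> H12" and v: "v \<in> H12"
  shows "((\<lambda>t. enn2real (gagliardo (\<lambda>x. u x + t * v x))) has_real_derivative
           (\<integral>z. 2 * dq u z * dq v z \<partial>PP)) (at 0)"
proof -
  have [measurable]: "u \<in> borel_measurable lborel" "v \<in> borel_measurable lborel"
    using u v by (auto simp: H12_def)
  have iu: "integrable PP (\<lambda>z. (dq u z)^2)" using u by (intro gag_int) (auto simp: H12_def)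
  have iv: "integrable PP (\<lambda>z. (dq v z)^2)" using v by (intro gag_int) (auto simp: H12_def)
  have eq: "enn2real (gagliardo (\<lambda>x. u x + t * v x)) = (\<integral>z. (dq u z + t * dq v z)^2 \<partial>PP)" for t
    by (subst gag_real) (auto simp: dq_lin)
  have "((\<lambda>t. \<integral>z. (dq u z + t * dq v z)^2 \<partial>PP) has_real_derivative
       (if integrable PP (\<lambda>z. (dq u z + 0 * dq v z)^2) then \<integral>z. 2 * dq u z * dq v z \<partial>PP else 0)) (at 0)"
  proof (rule diff_integral[where g="\<lambda>z. (dq u z)^2 + 2 * (dq v z)^2" and C=0 and \<delta>=1])
    show "integrable PP (\<lambda>z. (dq u z)^2 + 2 * (dq v z)^2)" using iu iv by auto
    show "\<bar>(dq u z + t * dq v z)^2 - (dq u z + 0 * dq v z)^2\<bar>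
          \<le> \<bar>t\<bar> * ((dq u z)^2 + 2 * (dq v z)^2 + 0 * \<bar>(dq u z + 0 * dq v z)^2\<bar>)"
      if "\<bar>t\<bar> < 1" for t z using sqdiff_bound[OF that] by simp
    show "((\<lambda>t. (dq u z + t * dq v z)^2) has_real_derivative 2 * dq u z * dq v z) (at 0)" for z
      by (auto intro!: derivative_eq_intros)
  qed auto
  then show ?thesis using iu unfolding eq by simp
qed

lemma L2_deriv:
  assumes u: "u \<in> H12" and v: "v \<in> H12"
  shows "((\<lambda>t. enn2real (L2sq (\<lambda>x. u x + t * v x))) has_real_derivative
           (\<integral>x. 2 * u x * v x \<partial>lborel)) (at 0)"
proof -
  have [measurable]: "u \<in> borel_measurable lborel" "v \<in> borel_measurable lborel"
    using u v by (auto simp: H12_def)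
  have iu: "integrable lborel (\<lambda>z. (u z)^2)" using u by (intro L2_int) (auto simp: H12_def)
  have iv: "integrable lborel (\<lambda>z. (v z)^2)" using v by (intro L2_int) (auto simp: H12_def)
  have eq: "enn2real (L2sq (\<lambda>x. u x + t * v x)) = (\<integral>z. (u z + t * v z)^2 \<partial>lborel)" for t
    by (subst L2_real) auto
  have "((\<lambda>t. \<integral>z. (u z + t * v z)^2 \<partial>lborel) has_real_derivative
       (if integrable lborel (\<lambda>z. (u z + 0 * v z)^2) then \<integral>z. 2 * u z * v z \<partial>lborel else 0)) (at 0)"
  proof (rule diff_integral[where g="\<lambda>z. (u z)^2 + 2 * (v z)^2" and C=0 and \<delta>=1])
    show "integrable lborel (\<lambda>z. (u z)^2 + 2 * (v z)^2)" using iu iv by auto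
    show "\<bar>(u z + t * v z)^2 - (u z + 0 * v z)^2\<bar>
          \<le> \<bar>t\<bar> * ((u z)^2 + 2 * (v z)^2 + 0 * \<bar>(u z + 0 * v z)^2\<bar>)"
      if "\<bar>t\<bar> < 1" for t z using sqdiff_bound[OF that] by simp
    show "((\<lambda>t. (u z + t * v z)^2) has_real_derivative 2 * u z * v z) (at 0)" for z
      by (auto intro!: derivative_eq_intros)
  qed auto
  then show ?thesis using iu unfolding eq by simp
qed

lemma quart_bound:
  fixes a b c d t :: real
  assumes ab: "\<bar>b\<bar> \<le> \<bar>a\<bar>" and cd: "\<bar>d\<bar> \<le> \<bar>c\<bar>" and t: "\<bar>t\<bar> < 1"
  shows "\<bar>(a + t*b)^2 * (c + t*d)^2 - a^2 * c^2\<bar> \<le> \<bar>t\<bar> * (15 * (a^2 * c^2))"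
proof -
  define p where "p = (a + t*b)^2 - a^2"
  define q where "q = (c + t*d)^2 - c^2"
  have b2: "b^2 \<le> a^2" using ab by (metis abs_le_square_iff)
  have d2: "d^2 \<le> c^2" using cd by (metis abs_le_square_iff)
  have tp: "0 \<le> \<bar>t\<bar>" by simp
  have p: "\<bar>p\<bar> \<le> \<bar>t\<bar> * (3 * a^2)"
  proof -
    have "\<bar>p\<bar> \<le> \<bar>t\<bar> * (a^2 + 2 * b^2 + 0 * \<bar>a^2\<bar>)" unfolding p_def by (rule sqdiff_bound[OF t])
    also have "\<dots> \<le> \<bar>t\<bar> * (3 * a^2)" using b2 by (intro mult_left_mono) auto
    finally show ?thesis .
  qed
  have q: "\<bar>q\<bar> \<le> \<bar>t\<bar> * (3 * c^2)"
  proof -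
    have "\<bar>q\<bar> \<le> \<bar>t\<bar> * (c^2 + 2 * d^2 + 0 * \<bar>c^2\<bar>)" unfolding q_def by (rule sqdiff_bound[OF t])
    also have "\<dots> \<le> \<bar>t\<bar> * (3 * c^2)" using d2 by (intro mult_left_mono) auto
    finally show ?thesis .
  qed
  have e: "(a + t*b)^2 * (c + t*d)^2 - a^2 * c^2 = a^2 * q + c^2 * p + p * q"
    unfolding p_def q_def by (simp add: algebra_simps)
  have 1: "\<bar>a^2 * q\<bar> \<le> \<bar>t\<bar> * (3 * (a^2 * c^2))"
  proof -
    have "\<bar>a^2 * q\<bar> = a^2 * \<bar>q\<bar>" by (simp add: abs_mult)
    also have "\<dots> \<le> a^2 * (\<bar>t\<bar> * (3 * c^2))" using q by (intro mult_left_mono) auto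
    finally show ?thesis by (simp add: algebra_simps)
  qed
  have 2: "\<bar>c^2 * p\<bar> \<le> \<bar>t\<bar> * (3 * (a^2 * c^2))"
  proof -
    have "\<bar>c^2 * p\<bar> = c^2 * \<bar>p\<bar>" by (simp add: abs_mult)
    also have "\<dots> \<le> c^2 * (\<bar>t\<bar> * (3 * a^2))" using p by (intro mult_left_mono) auto
    finally show ?thesis by (simp add: algebra_simps)
  qed
  have 3: "\<bar>p * q\<bar> \<le> \<bar>t\<bar> * (9 * (a^2 * c^2))"
  proof -
    have "\<bar>p * q\<bar> = \<bar>p\<bar> * \<bar>q\<bar>" by (simp add: abs_mult)
    also have "\<dots> \<le> (\<bar>t\<bar> * (3 * a^2)) * (\<bar>t\<bar> * (3 * c^2))" using p q by (intro mult_mono) auto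
    also have "\<dots> = \<bar>t\<bar> * (\<bar>t\<bar> * (9 * (a^2 * c^2)))" by (simp add: algebra_simps)
    also have "\<dots> \<le> \<bar>t\<bar> * (1 * (9 * (a^2 * c^2)))" using t
      by (intro mult_left_mono mult_right_mono) auto
    finally show ?thesis by simp
  qed
  show ?thesis unfolding e using 1 2 3 by (simp add: algebra_simps)
qed

definition Vi :: "(real \<Rightarrow> real) \<Rightarrow> real \<times> real \<Rightarrow> real" where
  "Vi w p = ln \<bar>fst p - snd p\<bar> * (w (fst p))^2 * (w (snd p))^2"

lemma V0_Vi: "V0 w = (\<integral>p. Vi w p \<partial>PP)"
  unfolding V0_def Vi_def ..

lemma V_deriv:
  assumes [measurable]: "u \<in> borel_measurable lborel" "v \<in> borel_measurable lborel"
    and vu: "\<And>x. \<bar>v x\<bar> \<le> \<bar>u x\<bar>"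
  shows "((\<lambda>t. V0 (\<lambda>x. u x + t * v x)) has_real_derivative
     (if integrable PP (Vi u) then
        (\<integral>p. ln \<bar>fst p - snd p\<bar> * (2 * u (fst p) * v (fst p) * (u (snd p))^2
             + (u (fst p))^2 * (2 * u (snd p) * v (snd p))) \<partial>PP) else 0)) (at 0)"
proof -
  define \<phi> where "\<phi> t p = ln \<bar>fst p - snd p\<bar> * (u (fst p) + t * v (fst p))^2 * (u (snd p) + t * v (snd p))^2"
    for t p
  have phi0: "\<phi> 0 = Vi u" unfolding \<phi>_def Vi_def by (simp add: fun_eq_iff)
  have eq: "V0 (\<lambda>x. u x + t * v x) = (\<integral>p. \<phi> t p \<partial>PP)" for t
    unfolding V0_def \<phi>_def by simp
  have "((\<lambda>t. \<integral>p. \<phi> t p \<partial>PP) has_real_derivative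
     (if integrable PP (\<phi> 0) then
        (\<integral>p. ln \<bar>fst p - snd p\<bar> * (2 * u (fst p) * v (fst p) * (u (snd p))^2
             + (u (fst p))^2 * (2 * u (snd p) * v (snd p))) \<partial>PP) else 0)) (at 0)"
  proof (rule diff_integral[where g="\<lambda>p. 0" and C=15 and \<delta>=1])
    show "\<phi> t \<in> borel_measurable PP" for t unfolding \<phi>_def by measurable
    show "(\<lambda>p. ln \<bar>fst p - snd p\<bar> * (2 * u (fst p) * v (fst p) * (u (snd p))^2
             + (u (fst p))^2 * (2 * u (snd p) * v (snd p)))) \<in> borel_measurable PP" by measurable
    show "\<bar>\<phi> t p - \<phi> 0 p\<bar> \<le> \<bar>t\<bar> * (0 + 15 * \<bar>\<phi> 0 p\<bar>)" if t: "\<bar>t\<bar> < 1" for t p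
    proof -
      have "\<bar>\<phi> t p - \<phi> 0 p\<bar> = \<bar>ln \<bar>fst p - snd p\<bar>\<bar> *
          \<bar>(u (fst p) + t * v (fst p))^2 * (u (snd p) + t * v (snd p))^2 - (u (fst p))^2 * (u (snd p))^2\<bar>"
        unfolding \<phi>_def by (simp add: abs_mult[symmetric] algebra_simps)
      also have "\<dots> \<le> \<bar>ln \<bar>fst p - snd p\<bar>\<bar> * (\<bar>t\<bar> * (15 * ((u (fst p))^2 * (u (snd p))^2)))"
        by (intro mult_left_mono quart_bound vu t) auto
      also have "\<dots> = \<bar>t\<bar> * (0 + 15 * \<bar>\<phi> 0 p\<bar>)"
        unfolding \<phi>_def by (simp add: abs_mult algebra_simps)
      finally show ?thesis .
    qed
    show "((\<lambda>t. \<phi> t p) has_real_derivative ln \<bar>fst p - snd p\<bar> * (2 * u (fst p) * v (fst p) * (u (snd p))^2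
             + (u (fst p))^2 * (2 * u (snd p) * v (snd p)))) (at 0)" for p
      unfolding \<phi>_def by (auto intro!: derivative_eq_intros simp: algebra_simps)
  qed auto
  then show ?thesis unfolding eq phi0 .
qed

lemma primF_cont: "continuous_on UNIV f \<Longrightarrow> continuous_on UNIV (primF f)"
  by (meson DERIV_isCont continuous_at_imp_continuous_on primF_deriv)

lemma primF_meas[measurable]: "continuous_on UNIV f \<Longrightarrow> primF f \<in> borel_measurable borel"
  by (rule borel_measurable_continuous_onI[OF primF_cont])

lemma G_deriv:
  assumes cf: "continuous_on UNIV f"
    and L: "\<And>s. \<bar>s\<bar> \<le> 4 * m \<Longrightarrow> \<bar>f s\<bar> \<le> L * \<bar>s\<bar>" and L0: "0 \<le> L"
    and [measurable]: "u \<in> borel_measurable lborel" "v \<in> borel_measurable lborel"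
    and vu: "\<And>x. \<bar>v x\<bar> \<le> \<bar>u x\<bar>" and vz: "\<And>x. 2 * m \<le> \<bar>u x\<bar> \<Longrightarrow> v x = 0"
    and iu: "integrable lborel (\<lambda>x. (u x)^2)"
  shows "((\<lambda>t. \<integral>x. primF f (u x + t * v x) \<partial>lborel) has_real_derivative
     (if integrable lborel (\<lambda>x. primF f (u x)) then \<integral>x. f (u x) * v x \<partial>lborel else 0)) (at 0)"
proof -
  have [measurable]: "primF f \<in> borel_measurable borel" "f \<in> borel_measurable borel"
    using cf by (auto intro: primF_meas borel_measurable_continuous_onI)
  have "((\<lambda>t. \<integral>x. primF f (u x + t * v x) \<partial>lborel) has_real_derivative
     (if integrable lborel (\<lambda>x. primF f (u x + 0 * v x)) then \<integral>x. f (u x) * v x \<partial>lborel else 0)) (at 0)"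
  proof (rule diff_integral[where g="\<lambda>x. 2 * L * (u x)^2" and C=0 and \<delta>=1])
    show "integrable lborel (\<lambda>x. 2 * L * (u x)^2)" using iu by auto
    show "\<bar>primF f (u x + t * v x) - primF f (u x + 0 * v x)\<bar>
        \<le> \<bar>t\<bar> * (2 * L * (u x)^2 + 0 * \<bar>primF f (u x + 0 * v x)\<bar>)" if t: "\<bar>t\<bar> < 1" for t x
    proof (cases "2 * m \<le> \<bar>u x\<bar>")
      case True then show ?thesis using vz[OF True] L0 by simp
    next
      case False
      have tv: "\<bar>t * v x\<bar> \<le> \<bar>u x\<bar>" using t vu[of x]
        by (simp add: abs_mult mult_le_one order_trans[OF mult_left_le_one_le])
      have "\<bar>primF f (u x + t * v x) - primF f (u x)\<bar> \<le> L * (2 * \<bar>u x\<bar>) * \<bar>(u x + t * v x) - u x\<bar>"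
        by (rule F_diff_bound[OF cf L L0]) (use False tv in auto)
      also have "\<dots> = L * (2 * \<bar>u x\<bar>) * (\<bar>t\<bar> * \<bar>v x\<bar>)" by (simp add: abs_mult)
      also have "\<dots> \<le> L * (2 * \<bar>u x\<bar>) * (\<bar>t\<bar> * \<bar>u x\<bar>)"
        using vu[of x] L0 by (intro mult_left_mono) auto
      also have "\<dots> = \<bar>t\<bar> * (2 * L * (u x)^2)" by (simp add: power2_eq_square abs_mult_self algebra_simps)
      finally show ?thesis by simp
    qed
    show "((\<lambda>t. primF f (u x + t * v x)) has_real_derivative f (u x) * v x) (at 0)" for x
    proof -
      have "((\<lambda>t. primF f (u x + t * v x)) has_real_derivative f (u x + 0 * v x) * (0 + 1 * v x)) (at 0)"
        by (rule DERIV_chain2[OF primF_deriv[OF cf]]) (auto intro!: derivative_eq_intros)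
      then show ?thesis by simp
    qed
  qed auto
  then show ?thesis by simp
qed

definition DV :: "(real \<Rightarrow> real) \<Rightarrow> (real \<Rightarrow> real) \<Rightarrow> real" where
  "DV u v = (if integrable PP (Vi u) then
        (\<integral>p. ln \<bar>fst p - snd p\<bar> * (2 * u (fst p) * v (fst p) * (u (snd p))^2
             + (u (fst p))^2 * (2 * u (snd p) * v (snd p))) \<partial>PP) else 0)"

definition DG :: "(real \<Rightarrow> real) \<Rightarrow> (real \<Rightarrow> real) \<Rightarrow> (real \<Rightarrow> real) \<Rightarrow> real" where
  "DG f u v = (if integrable lborel (\<lambda>x. primF f (u x)) then \<integral>x. f (u x) * v x \<partial>lborel else 0)"

lemma Ifun_eq: "Ifun f w = (enn2real (gagliardo w) + enn2real (L2sq w)) / 2 + V0 w / 4 - (\<integral>x. primF f (w x) \<partial>lborel)"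
  unfolding Ifun_def hnorm_sq ..

lemma Ifun_deriv:
  assumes cf: "continuous_on UNIV f"
    and L: "\<And>s. \<bar>s\<bar> \<le> 4 * m \<Longrightarrow> \<bar>f s\<bar> \<le> L * \<bar>s\<bar>" and L0: "0 \<le> L"
    and u: "u \<in> H12" and v: "v \<in> H12"
    and vu: "\<And>x. \<bar>v x\<bar> \<le> \<bar>u x\<bar>" and vz: "\<And>x. 2 * m \<le> \<bar>u x\<bar> \<Longrightarrow> v x = 0"
  shows "((\<lambda>t. Ifun f (\<lambda>x. u x + t * v x)) has_real_derivative
     ((\<integral>z. 2 * dq u z * dq v z \<partial>PP) + (\<integral>x. 2 * u x * v x \<partial>lborel)) / 2 + DV u v / 4 - DG f u v) (at 0)"
proof -
  have um[measurable]: "u \<in> borel_measurable lborel" and vm[measurable]: "v \<in> borel_measurable lborel"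
    using u v by (auto simp: H12_def)
  have iu: "integrable lborel (\<lambda>z. (u z)^2)" using u by (intro L2_int) (auto simp: H12_def)
  note d1 = gag_deriv[OF u v] and d2 = L2_deriv[OF u v]
  note d3 = V_deriv[of u v, OF _ _ vu, folded DV_def]
  note d4 = G_deriv[OF cf L L0 _ _ vu vz iu, folded DG_def]
  have "((\<lambda>t. (enn2real (gagliardo (\<lambda>x. u x + t * v x)) + enn2real (L2sq (\<lambda>x. u x + t * v x))) / 2
      + V0 (\<lambda>x. u x + t * v x) / 4 - (\<integral>x. primF f (u x + t * v x) \<partial>lborel)) has_real_derivative
     ((\<integral>z. 2 * dq u z * dq v z \<partial>PP) + (\<integral>x. 2 * u x * v x \<partial>lborel)) / 2 + DV u v / 4 - DG f u v) (at 0)"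
    by (intro DERIV_diff[OF DERIV_add[OF DERIV_cdivide[OF DERIV_add[OF d1 d2]] DERIV_cdivide[OF d3]] d4]) (use um vm in auto)
  then show ?thesis unfolding Ifun_eq .
qed

lemma hcut_ev: "\<forall>\<^sub>F m in sequentially. hcut (real (Suc m)) s = s"
  unfolding eventually_sequentially
proof (intro exI allI impI)
  fix m assume "nat \<lceil>\<bar>s\<bar>\<rceil> \<le> m"
  then have "\<bar>s\<bar> \<le> real (Suc m)" by linarith
  then show "hcut (real (Suc m)) s = s" by (rule hcut_id)
qed

lemma dq_hcut_bound: "\<bar>dq (\<lambda>x. hcut M (u x)) z\<bar> \<le> \<bar>dq u z\<bar>" if "0 \<le> M"
  unfolding dq_def abs_divide by (intro divide_right_mono hcut_lip that) auto

lemma lim_a: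
  assumes u: "u \<in> H12"
  shows "(\<lambda>m. \<integral>z. 2 * dq u z * dq (\<lambda>x. hcut (real (Suc m)) (u x)) z \<partial>PP) \<longlonglongrightarrow> (\<integral>z. 2 * (dq u z)^2 \<partial>PP)"
proof (rule integral_dominated_convergence[where w="\<lambda>z. 2 * (dq u z)^2"])
  have um[measurable]: "u \<in> borel_measurable lborel" using u by (auto simp: H12_def)
  show "(\<lambda>z. 2 * (dq u z)^2) \<in> borel_measurable PP" by measurable
  show "(\<lambda>z. 2 * dq u z * dq (\<lambda>x. hcut (real (Suc m)) (u x)) z) \<in> borel_measurable PP" for m
    by measurable
  show "integrable PP (\<lambda>z. 2 * (dq u z)^2)" using gag_int[OF um] u by (auto simp: H12_def)
  show "AE z in PP. (\<lambda>m. 2 * dq u z * dq (\<lambda>x. hcut (real (Suc m)) (u x)) z) \<longlonglongrightarrow> 2 * (dq u z)^2"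
  proof (intro AE_I2 tendsto_eventually)
    fix z
    show "\<forall>\<^sub>F m in sequentially. 2 * dq u z * dq (\<lambda>x. hcut (real (Suc m)) (u x)) z = 2 * (dq u z)^2"
      using eventually_conj[OF hcut_ev[of "u (fst z)"] hcut_ev[of "u (snd z)"]]
      by eventually_elim (simp add: dq_def power2_eq_square)
  qed
  show "AE z in PP. norm (2 * dq u z * dq (\<lambda>x. hcut (real (Suc m)) (u x)) z) \<le> 2 * (dq u z)^2" for m
  proof (intro AE_I2)
    fix z
    have "\<bar>dq u z * dq (\<lambda>x. hcut (real (Suc m)) (u x)) z\<bar> \<le> \<bar>dq u z\<bar> * \<bar>dq u z\<bar>"
      unfolding abs_mult by (intro mult_left_mono dq_hcut_bound) auto
    then show "norm (2 * dq u z * dq (\<lambda>x. hcut (real (Suc m)) (u x)) z) \<le> 2 * (dq u z)^2"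
      by (simp add: abs_mult power2_eq_square)
  qed
qed

lemma lim_b:
  assumes u: "u \<in> H12"
  shows "(\<lambda>m. \<integral>x. 2 * u x * hcut (real (Suc m)) (u x) \<partial>lborel) \<longlonglongrightarrow> (\<integral>x. 2 * (u x)^2 \<partial>lborel)"
proof (rule integral_dominated_convergence[where w="\<lambda>x. 2 * (u x)^2"])
  have um[measurable]: "u \<in> borel_measurable lborel" using u by (auto simp: H12_def)
  show "(\<lambda>x. 2 * (u x)^2) \<in> borel_measurable lborel" by measurable
  show "(\<lambda>x. 2 * u x * hcut (real (Suc m)) (u x)) \<in> borel_measurable lborel" for m
    by measurable
  show "integrable lborel (\<lambda>x. 2 * (u x)^2)" using L2_int[OF um] u by (auto simp: H12_def)
  show "AE x in lborel. (\<lambda>m. 2 * u x * hcut (real (Suc m)) (u x)) \<longlonglongrightarrow> 2 * (u x)^2"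
  proof (intro AE_I2 tendsto_eventually)
    fix x
    show "\<forall>\<^sub>F m in sequentially. 2 * u x * hcut (real (Suc m)) (u x) = 2 * (u x)^2"
      using hcut_ev[of "u x"] by eventually_elim (simp add: power2_eq_square)
  qed
  show "AE x in lborel. norm (2 * u x * hcut (real (Suc m)) (u x)) \<le> 2 * (u x)^2" for m
  proof (intro AE_I2)
    fix x
    have "\<bar>u x * hcut (real (Suc m)) (u x)\<bar> \<le> \<bar>u x\<bar> * \<bar>u x\<bar>"
      unfolding abs_mult by (intro mult_left_mono hcut_abs_le) auto
    then show "norm (2 * u x * hcut (real (Suc m)) (u x)) \<le> 2 * (u x)^2"
      by (simp add: abs_mult power2_eq_square)
  qed
qed

lemma lim_c:
  assumes u: "u \<in> H12"
  shows "(\<lambda>m. DV u (\<lambda>x. hcut (real (Suc m)) (u x))) \<longlonglongrightarrow> 4 * V0 u"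
proof (cases "integrable PP (Vi u)")
  case False
  then show ?thesis by (simp add: DV_def V0_Vi not_integrable_integral_eq)
next
  case True
  have um[measurable]: "u \<in> borel_measurable lborel" using u by (auto simp: H12_def)
  have "(\<lambda>m. \<integral>p. ln \<bar>fst p - snd p\<bar> * (2 * u (fst p) * hcut (real (Suc m)) (u (fst p)) * (u (snd p))^2
             + (u (fst p))^2 * (2 * u (snd p) * hcut (real (Suc m)) (u (snd p)))) \<partial>PP)
     \<longlonglongrightarrow> (\<integral>p. 4 * Vi u p \<partial>PP)"
  proof (rule integral_dominated_convergence[where w="\<lambda>p. 4 * \<bar>Vi u p\<bar>"])
    show "(\<lambda>p. 4 * Vi u p) \<in> borel_measurable PP" unfolding Vi_def by measurable
    show "(\<lambda>p. ln \<bar>fst p - snd p\<bar> * (2 * u (fst p) * hcut (real (Suc m)) (u (fst p)) * (u (snd p))^2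
             + (u (fst p))^2 * (2 * u (snd p) * hcut (real (Suc m)) (u (snd p))))) \<in> borel_measurable PP" for m
      by measurable
    show "integrable PP (\<lambda>p. 4 * \<bar>Vi u p\<bar>)" using True by auto
    show "AE p in PP. (\<lambda>m. ln \<bar>fst p - snd p\<bar> * (2 * u (fst p) * hcut (real (Suc m)) (u (fst p)) * (u (snd p))^2
             + (u (fst p))^2 * (2 * u (snd p) * hcut (real (Suc m)) (u (snd p))))) \<longlonglongrightarrow> 4 * Vi u p"
    proof (intro AE_I2 tendsto_eventually)
      fix p
      show "\<forall>\<^sub>F m in sequentially. ln \<bar>fst p - snd p\<bar> * (2 * u (fst p) * hcut (real (Suc m)) (u (fst p)) * (u (snd p))^2
             + (u (fst p))^2 * (2 * u (snd p) * hcut (real (Suc m)) (u (snd p)))) = 4 * Vi u p"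
        using eventually_conj[OF hcut_ev[of "u (fst p)"] hcut_ev[of "u (snd p)"]]
        by eventually_elim (simp add: Vi_def power2_eq_square algebra_simps)
    qed
    show "AE p in PP. norm (ln \<bar>fst p - snd p\<bar> * (2 * u (fst p) * hcut (real (Suc m)) (u (fst p)) * (u (snd p))^2
             + (u (fst p))^2 * (2 * u (snd p) * hcut (real (Suc m)) (u (snd p))))) \<le> 4 * \<bar>Vi u p\<bar>" for m
    proof (intro AE_I2)
      fix p :: "real \<times> real"
      define a where "a = u (fst p)"
      define c where "c = u (snd p)"
      define b where "b = hcut (real (Suc m)) a"
      define d where "d = hcut (real (Suc m)) c"
      define K where "K = ln \<bar>fst p - snd p\<bar>"
      have ab: "\<bar>a * b\<bar> \<le> a^2" unfolding b_def abs_mult power2_eq_square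
        by (metis abs_ge_zero abs_mult_self_eq hcut_abs_le mult_left_mono of_nat_0_le_iff)
      have cd: "\<bar>c * d\<bar> \<le> c^2" unfolding d_def abs_mult power2_eq_square
        by (metis abs_ge_zero abs_mult_self_eq hcut_abs_le mult_left_mono of_nat_0_le_iff)
      have "\<bar>2 * a * b * c^2 + a^2 * (2 * c * d)\<bar> \<le> 2 * \<bar>a * b\<bar> * c^2 + a^2 * (2 * \<bar>c * d\<bar>)"
      proof -
        have e1: "\<bar>2 * a * b * c^2\<bar> = 2 * \<bar>a * b\<bar> * c^2" by (simp add: abs_mult)
        have e2: "\<bar>a^2 * (2 * c * d)\<bar> = a^2 * (2 * \<bar>c * d\<bar>)" by (simp add: abs_mult)
        show ?thesis using abs_triangle_ineq[of "2 * a * b * c^2" "a^2 * (2 * c * d)"] unfolding e1 e2 .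
      qed
      also have "\<dots> \<le> 2 * a^2 * c^2 + a^2 * (2 * c^2)"
        using ab cd by (intro add_mono mult_right_mono mult_left_mono) auto
      finally have "\<bar>2 * a * b * c^2 + a^2 * (2 * c * d)\<bar> \<le> 4 * (a^2 * c^2)" by simp
      then have "\<bar>K\<bar> * \<bar>2 * a * b * c^2 + a^2 * (2 * c * d)\<bar> \<le> \<bar>K\<bar> * (4 * (a^2 * c^2))"
        by (intro mult_left_mono) auto
      then have "\<bar>K * (2 * a * b * c^2 + a^2 * (2 * c * d))\<bar> \<le> 4 * \<bar>K * a^2 * c^2\<bar>"
        by (simp add: abs_mult mult.assoc mult.left_commute)
      then show "norm (ln \<bar>fst p - snd p\<bar> * (2 * u (fst p) * hcut (real (Suc m)) (u (fst p)) * (u (snd p))^2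
             + (u (fst p))^2 * (2 * u (snd p) * hcut (real (Suc m)) (u (snd p))))) \<le> 4 * \<bar>Vi u p\<bar>"
        unfolding Vi_def a_def[symmetric] b_def[symmetric] c_def[symmetric] d_def[symmetric]
          K_def[symmetric] by (simp only: real_norm_def)
    qed
  qed
  then show ?thesis using True by (simp add: DV_def V0_Vi)
qed

lemma fh_bound:
  assumes th: "4 < \<theta>" and ft: "\<forall>t. t \<noteq> 0 \<longrightarrow> f t * t \<ge> \<theta> * primF f t \<and> \<theta> * primF f t > 0"
    and M: "0 \<le> M"
  shows "f s * hcut M s \<ge> 4 * (if \<bar>s\<bar> \<le> M then primF f s else 0)"
proof (cases "s = 0")
  case True then show ?thesis by (simp add: hcut_0 primF_0)
next
  case False
  have a: "f s * s \<ge> \<theta> * primF f s" "\<theta> * primF f s > 0" using ft False by auto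
  have Fp: "primF f s > 0" using a(2) th by (simp add: zero_less_mult_iff)
  have "4 * primF f s \<le> \<theta> * primF f s" using th Fp by (intro mult_right_mono) auto
  then have b: "f s * s \<ge> 4 * primF f s" using a(1) by linarith
  show ?thesis
  proof (cases "\<bar>s\<bar> \<le> M")
    case True then show ?thesis using b by (simp add: hcut_id)
  next
    case False
    have fs: "f s * s > 0" using a Fp th by linarith
    have "0 \<le> f s * hcut M s"
    proof (cases "s > 0")
      case True
      then have "f s > 0" using fs by (simp add: zero_less_mult_iff)
      then show ?thesis using hcut_pos[OF M True] by simp
    next
      case nf: False
      then have s0: "s < 0" using \<open>s \<noteq> 0\<close> by simp
      then have "f s < 0" using fs by (simp add: zero_less_mult_iff)
      then show ?thesis using hcut_neg[OF M s0] by (simp add: zero_le_mult_iff)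
    qed
    then show ?thesis using False by simp
  qed
qed

lemma lim_d:
  assumes cf: "continuous_on UNIV f" and f2: "f2 f" and f0: "f 0 = 0"
    and th: "4 < \<theta>" and ft: "\<forall>t. t \<noteq> 0 \<longrightarrow> f t * t \<ge> \<theta> * primF f t \<and> \<theta> * primF f t > 0"
    and u: "u \<in> H12" and e: "0 < e"
  shows "\<forall>\<^sub>F m in sequentially. DG f u (\<lambda>x. hcut (real (Suc m)) (u x)) \<ge> 4 * (\<integral>x. primF f (u x) \<partial>lborel) - e"
proof (cases "integrable lborel (\<lambda>x. primF f (u x))")
  case False
  then show ?thesis using e by (simp add: DG_def not_integrable_integral_eq)
next
  case True
  have um[measurable]: "u \<in> borel_measurable lborel" using u by (auto simp: H12_def)
  have [measurable]: "primF f \<in> borel_measurable borel" "f \<in> borel_measurable borel"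
    using cf by (auto intro: primF_meas borel_measurable_continuous_onI)
  have iu: "integrable lborel (\<lambda>z. (u z)^2)" using u by (intro L2_int) (auto simp: H12_def)
  define T where "T m = (\<integral>x. (if \<bar>u x\<bar> \<le> real (Suc m) then primF f (u x) else 0) \<partial>lborel)" for m
  have Tl: "T \<longlonglongrightarrow> (\<integral>x. primF f (u x) \<partial>lborel)"
    unfolding T_def
  proof (rule integral_dominated_convergence[where w="\<lambda>x. \<bar>primF f (u x)\<bar>"])
    show "(\<lambda>x. primF f (u x)) \<in> borel_measurable lborel" by measurable
    show "(\<lambda>x. if \<bar>u x\<bar> \<le> real (Suc m) then primF f (u x) else 0) \<in> borel_measurable lborel" for m
      by measurable
    show "integrable lborel (\<lambda>x. \<bar>primF f (u x)\<bar>)" using True by auto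
    show "AE x in lborel. (\<lambda>m. if \<bar>u x\<bar> \<le> real (Suc m) then primF f (u x) else 0) \<longlonglongrightarrow> primF f (u x)"
    proof (intro AE_I2 tendsto_eventually)
      fix x
      show "\<forall>\<^sub>F m in sequentially. (if \<bar>u x\<bar> \<le> real (Suc m) then primF f (u x) else 0) = primF f (u x)"
        unfolding eventually_sequentially
      proof (intro exI[where x="nat \<lceil>\<bar>u x\<bar>\<rceil>"] allI impI)
        fix n assume "nat \<lceil>\<bar>u x\<bar>\<rceil> \<le> n"
        then have "\<bar>u x\<bar> \<le> real (Suc n)" by linarith
        then show "(if \<bar>u x\<bar> \<le> real (Suc n) then primF f (u x) else 0) = primF f (u x)" by simp
      qed
    qed
    show "AE x in lborel. norm (if \<bar>u x\<bar> \<le> real (Suc m) then primF f (u x) else 0) \<le> \<bar>primF f (u x)\<bar>" for m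
      by (intro AE_I2) auto
  qed
  have ev1: "\<forall>\<^sub>F m in sequentially. T m > (\<integral>x. primF f (u x) \<partial>lborel) - e / 4"
    using Tl e by (intro order_tendstoD) auto
  have ge: "DG f u (\<lambda>x. hcut (real (Suc m)) (u x)) \<ge> 4 * T m" for m
  proof -
    define M where "M = real (Suc m)"
    have M0: "0 \<le> M" unfolding M_def by simp
    obtain L where L0: "L \<ge> 0" and L: "\<And>s. \<bar>s\<bar> \<le> 4 * M \<Longrightarrow> \<bar>f s\<bar> \<le> L * \<bar>s\<bar>"
      using lin_bound[OF cf f2 f0, of "4 * M"] by blast
    have i1: "integrable lborel (\<lambda>x. f (u x) * hcut M (u x))"
    proof (rule Bochner_Integration.integrable_bound[where f="\<lambda>x. L * (u x)^2"])
      show "integrable lborel (\<lambda>x. L * (u x)^2)" using iu by auto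
      show "(\<lambda>x. f (u x) * hcut M (u x)) \<in> borel_measurable lborel" by measurable
      show "AE x in lborel. norm (f (u x) * hcut M (u x)) \<le> norm (L * (u x)^2)"
      proof (intro AE_I2)
        fix x
        show "norm (f (u x) * hcut M (u x)) \<le> norm (L * (u x)^2)"
        proof (cases "2 * M \<le> \<bar>u x\<bar>")
          case True then show ?thesis using hcut_zero[OF M0 True] by simp
        next
          case False
          have "\<bar>f (u x)\<bar> * \<bar>hcut M (u x)\<bar> \<le> (L * \<bar>u x\<bar>) * \<bar>u x\<bar>"
            using L[of "u x"] False M0 hcut_abs_le[OF M0, of "u x"] L0 by (intro mult_mono) auto
          then show ?thesis using L0 by (simp add: abs_mult power2_eq_square)
        qed
      qed
    qed
    have i2: "integrable lborel (\<lambda>x. 4 * (if \<bar>u x\<bar> \<le> M then primF f (u x) else 0))"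
    proof (rule Bochner_Integration.integrable_bound[where f="\<lambda>x. 4 * primF f (u x)"])
      show "integrable lborel (\<lambda>x. 4 * primF f (u x))" using True by auto
      show "(\<lambda>x. 4 * (if \<bar>u x\<bar> \<le> M then primF f (u x) else 0)) \<in> borel_measurable lborel" by measurable
      show "AE x in lborel. norm (4 * (if \<bar>u x\<bar> \<le> M then primF f (u x) else 0)) \<le> norm (4 * primF f (u x))"
        by (intro AE_I2) auto
    qed
    have "4 * T m = (\<integral>x. 4 * (if \<bar>u x\<bar> \<le> M then primF f (u x) else 0) \<partial>lborel)"
      unfolding T_def M_def by simp
    also have "\<dots> \<le> (\<integral>x. f (u x) * hcut M (u x) \<partial>lborel)"
      by (intro integral_mono i1 i2 fh_bound[OF th ft M0])
    also have "\<dots> = DG f u (\<lambda>x. hcut (real (Suc m)) (u x))"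
      unfolding DG_def M_def using True by simp
    finally show ?thesis .
  qed
  show ?thesis using ev1
  proof eventually_elim
    case (elim m)
    then show ?case using ge[of m] e by linarith
  qed
qed

lemma key:
  assumes cf: "continuous_on UNIV f" and f2: "f2 f" and f0: "f 0 = 0"
    and th: "4 < \<theta>" and ft: "\<forall>t. t \<noteq> 0 \<longrightarrow> f t * t \<ge> \<theta> * primF f t \<and> \<theta> * primF f t > 0"
    and u: "u \<in> Xsp" and e: "0 < e"
  shows "\<exists>w D. w \<in> Xsp \<and> normX w \<le> normX u \<and>
     ((\<lambda>t. Ifun f (\<lambda>x. u x + t * w x)) has_real_derivative D) (at 0) \<and>
     (hnorm u)^2 / 4 - e \<le> Ifun f u - D / 4"
proof -
  have uH: "u \<in> H12" using u by (simp add: Xsp_def)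
  have um[measurable]: "u \<in> borel_measurable lborel" using uH by (simp add: H12_def)
  define w where "w m = (\<lambda>x. hcut (real (Suc m)) (u x))" for m
  define A where "A m = (\<integral>z. 2 * dq u z * dq (w m) z \<partial>PP)" for m
  define B where "B m = (\<integral>x. 2 * u x * w m x \<partial>lborel)" for m
  define g0 where "g0 = (\<integral>z. (dq u z)^2 \<partial>PP)"
  define l0 where "l0 = (\<integral>x. (u x)^2 \<partial>lborel)"
  define G0 where "G0 = (\<integral>x. primF f (u x) \<partial>lborel)"
  have hn: "(hnorm u)^2 = g0 + l0" unfolding hnorm_sq g0_def l0_def gag_real[OF um] L2_real[OF um] ..
  have If: "Ifun f u = (g0 + l0) / 2 + V0 u / 4 - G0"
    unfolding Ifun_eq g0_def l0_def G0_def gag_real[OF um] L2_real[OF um] ..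
  have lA: "A \<longlonglongrightarrow> 2 * g0" using lim_a[OF uH] unfolding A_def w_def g0_def by simp
  have lB: "B \<longlonglongrightarrow> 2 * l0" using lim_b[OF uH] unfolding B_def w_def l0_def by simp
  have lC: "(\<lambda>m. DV u (w m)) \<longlonglongrightarrow> 4 * V0 u" using lim_c[OF uH] unfolding w_def by simp
  define X where "X m = Ifun f u - ((A m + B m) / 2 + DV u (w m) / 4) / 4" for m
  have "X \<longlonglongrightarrow> Ifun f u - ((2 * g0 + 2 * l0) / 2 + 4 * V0 u / 4) / 4"
    unfolding X_def by (intro tendsto_intros lA lB lC) auto
  moreover have "Ifun f u - ((2 * g0 + 2 * l0) / 2 + 4 * V0 u / 4) / 4 = (g0 + l0) / 4 - G0"
    unfolding If by (simp add: field_simps)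
  ultimately have "X \<longlonglongrightarrow> (g0 + l0) / 4 - G0" by simp
  then have ev1: "\<forall>\<^sub>F m in sequentially. X m > (g0 + l0) / 4 - G0 - e / 2"
    using e by (intro order_tendstoD) auto
  have ev2: "\<forall>\<^sub>F m in sequentially. DG f u (w m) \<ge> 4 * G0 - 2 * e"
    using lim_d[OF cf f2 f0 th ft uH, of "2 * e"] e unfolding w_def G0_def by simp
  obtain m where m1: "X m > (g0 + l0) / 4 - G0 - e / 2" and m2: "DG f u (w m) \<ge> 4 * G0 - 2 * e"
    using eventually_happens'[OF _ eventually_conj[OF ev1 ev2]] by auto
  define M where "M = real (Suc m)"
  have M0: "0 \<le> M" unfolding M_def by simp
  obtain L where L0: "L \<ge> 0" and L: "\<And>s. \<bar>s\<bar> \<le> 4 * M \<Longrightarrow> \<bar>f s\<bar> \<le> L * \<bar>s\<bar>"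
    using lin_bound[OF cf f2 f0, of "4 * M"] by blast
  have wm[measurable]: "w m \<in> borel_measurable lborel" unfolding w_def by measurable
  have b1: "\<bar>w m x\<bar> \<le> 1 * \<bar>u x\<bar>" for x by (simp add: w_def hcut_abs_le)
  have b2: "\<bar>w m x - w m y\<bar> \<le> 1 * \<bar>u x - u y\<bar>" for x y by (simp add: w_def hcut_lip)
  note wX = Xsp_dom[OF u wm _ b1 b2, simplified]
  then have wH: "w m \<in> H12" by (simp add: Xsp_def)
  have vu: "\<bar>w m x\<bar> \<le> \<bar>u x\<bar>" for x unfolding w_def by (simp add: hcut_abs_le)
  have vz: "w m x = 0" if "2 * M \<le> \<bar>u x\<bar>" for x
    unfolding w_def using hcut_zero[OF M0 that] by (simp add: M_def)
  define D where "D = (A m + B m) / 2 + DV u (w m) / 4 - DG f u (w m)"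
  have der: "((\<lambda>t. Ifun f (\<lambda>x. u x + t * w m x)) has_real_derivative D) (at 0)"
    unfolding D_def A_def B_def by (rule Ifun_deriv[OF cf L L0 uH wH vu vz])
  have "Ifun f u - D / 4 = X m + DG f u (w m) / 4" unfolding X_def D_def by (simp add: field_simps)
  also have "\<dots> \<ge> (hnorm u)^2 / 4 - e" using m1 m2 unfolding hn by linarith
  finally have "(hnorm u)^2 / 4 - e \<le> Ifun f u - D / 4" .
  then show ?thesis using wX der by auto
qed

lemma hnorm_le_normX: "hnorm u \<le> normX u"
  unfolding normX_def by (simp add: enn2real_nonneg hnorm_def)

lemma bound_n:
  assumes cf: "continuous_on UNIV f" and f2: "f2 f" and f0: "f 0 = 0"
    and th: "4 < \<theta>" and ft: "\<forall>t. t \<noteq> 0 \<longrightarrow> f t * t \<ge> \<theta> * primF f t \<and> \<theta> * primF f t > 0"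
    and u: "u \<in> Xsp" and d: "0 < d" and Id: "Ifun f u < d"
    and sm: "dualnorm_dI f u * ereal (1 + normX u) < 1"
  shows "(hnorm u)^2 \<le> 4 * d + 2"
proof (cases "normX u = 0")
  case True
  then have "hnorm u = 0" using hnorm_le_normX[of u] hnorm_nonneg[of u] by simp
  then show ?thesis using d by simp
next
  case False
  define N where "N = normX u"
  have Np: "0 < N" using False normX_nonneg[of u] unfolding N_def by simp
  obtain w D where wX: "w \<in> Xsp" and wn: "normX w \<le> normX u"
    and der: "((\<lambda>t. Ifun f (\<lambda>x. u x + t * w x)) has_real_derivative D) (at 0)"
    and ineq: "(hnorm u)^2 / 4 - 1/4 \<le> Ifun f u - D / 4"
    using key[OF cf f2 f0 th ft u, of "1/4"] by auto
  have wm[measurable]: "w \<in> borel_measurable lborel" using wX by (simp add: Xsp_def H12_def)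
  define v where "v x = w x / N" for x
  have vm: "v \<in> borel_measurable lborel" unfolding v_def by measurable
  have c1: "\<bar>v x\<bar> \<le> (1 / N) * \<bar>w x\<bar>" for x using Np by (simp add: v_def abs_divide)
  have c2: "\<bar>v x - v y\<bar> \<le> (1 / N) * \<bar>w x - w y\<bar>" for x y
    using Np by (simp add: v_def abs_divide diff_divide_distrib[symmetric])
  have c0: "0 \<le> 1 / N" using Np by simp
  note vX = Xsp_dom[OF wX vm c0 c1 c2]
  have vn: "normX v \<le> 1"
  proof -
    have "normX w / N \<le> 1" using wn Np unfolding N_def by (simp add: divide_le_eq)
    moreover have "normX v \<le> normX w / N" using vX(2) by simp
    ultimately show ?thesis by linarith
  qed
  have eqf: "(\<lambda>t. Ifun f (\<lambda>x. u x + t * v x)) = (\<lambda>t. Ifun f (\<lambda>x. u x + (t / N) * w x))"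
    unfolding v_def by (simp add: field_simps)
  have "((\<lambda>t. Ifun f (\<lambda>x. u x + (t / N) * w x)) has_real_derivative D * (1 / N)) (at 0)"
  proof (rule DERIV_chain2[where f="\<lambda>s. Ifun f (\<lambda>x. u x + s * w x)" and g="\<lambda>t. t / N"])
    show "((\<lambda>s. Ifun f (\<lambda>x. u x + s * w x)) has_real_derivative D) (at (0 / N))" using der by simp
    show "((\<lambda>t. t / N) has_real_derivative 1 / N) (at 0)" using Np by (auto intro!: derivative_eq_intros)
  qed
  then have "dI f u v = D / N" unfolding dI_def eqf by (simp add: DERIV_imp_deriv)
  moreover have "ereal \<bar>dI f u v\<bar> \<le> dualnorm_dI f u"
    unfolding dualnorm_dI_def using vX(1) vn by (intro SUP_upper) auto
  ultimately have dn: "ereal (\<bar>D\<bar> / N) \<le> dualnorm_dI f u" using Np by (simp add: abs_divide)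
  have "ereal (\<bar>D\<bar> / N * (1 + N)) = ereal (\<bar>D\<bar> / N) * ereal (1 + N)" by simp
  also have "\<dots> \<le> dualnorm_dI f u * ereal (1 + N)"
    using dn Np by (intro ereal_mult_right_mono) auto
  also have "\<dots> < 1" using sm unfolding N_def .
  finally have "\<bar>D\<bar> / N * (1 + N) < 1" by simp
  moreover have "\<bar>D\<bar> \<le> \<bar>D\<bar> / N * (1 + N)"
  proof -
    have "\<bar>D\<bar> / N * (1 + N) = \<bar>D\<bar> / N + \<bar>D\<bar>" using Np by (simp add: field_simps)
    moreover have "0 \<le> \<bar>D\<bar> / N" using Np by simp
    ultimately show ?thesis by linarith
  qed
  ultimately have "\<bar>D\<bar> < 1" by linarith
  then show ?thesis using ineq Id by linarith
qed

theorem lemmal9: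
  fixes f :: "real \<Rightarrow> real" and u :: "nat \<Rightarrow> real \<Rightarrow> real" and d :: real
  assumes "f1 f \<or> f1' f" and "f2 f" and "f3 f"
    and "\<And>n. u n \<in> Xsp"
    and "d > 0" and "\<And>n. Ifun f (u n) < d"
    and "(\<lambda>n. dualnorm_dI f (u n) * ereal (1 + normX (u n))) \<longlonglongrightarrow> 0"
  shows "\<exists>C. \<forall>n. hnorm (u n) \<le> C"
proof -
  have cf: "continuous_on UNIV f" and f0: "f 0 = 0"
    using assms(1) unfolding f1_def f1'_def by auto
  obtain \<theta> where th: "4 < \<theta>" and ft: "\<forall>t. t \<noteq> 0 \<longrightarrow> f t * t \<ge> \<theta> * primF f t \<and> \<theta> * primF f t > 0"
    using assms(3) unfolding f3_def by auto
  have "\<forall>\<^sub>F n in sequentially. dualnorm_dI f (u n) * ereal (1 + normX (u n)) < 1"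
    using assms(7) by (intro order_tendstoD(2)) auto
  then obtain N0 where N0: "\<And>n. n \<ge> N0 \<Longrightarrow> dualnorm_dI f (u n) * ereal (1 + normX (u n)) < 1"
    unfolding eventually_sequentially by blast
  define C where "C = sqrt (4 * d + 2) + (\<Sum>n<N0. hnorm (u n))"
  have "hnorm (u n) \<le> C" for n
  proof (cases "n \<ge> N0")
    case True
    have "(hnorm (u n))^2 \<le> 4 * d + 2"
      by (rule bound_n[OF cf assms(2) f0 th ft assms(4) assms(5) assms(6) N0[OF True]])
    then have "sqrt ((hnorm (u n))^2) \<le> sqrt (4 * d + 2)" by (rule real_sqrt_le_mono)
    then have "hnorm (u n) \<le> sqrt (4 * d + 2)" using hnorm_nonneg[of "u n"] by simp
    moreover have "0 \<le> (\<Sum>n<N0. hnorm (u n))" by (intro sum_nonneg hnorm_nonneg)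
    ultimately show ?thesis unfolding C_def by linarith
  next
    case False
    then have "hnorm (u n) \<le> (\<Sum>n<N0. hnorm (u n))"
      by (intro member_le_sum hnorm_nonneg) auto
    moreover have "0 \<le> sqrt (4 * d + 2)" using assms(5) by simp
    ultimately show ?thesis unfolding C_def by linarith
  qed
  then show ?thesis by blast
qed

end
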